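(* Let $\mathcal{C}$ be a polarity and $\mathcal{H}\subseteq\mathcal{C}_+$ a refinement of $\mathcal{C}$. Let $x$ be an object of $\mathcal{C}$ that is injective in the polarity $\mathcal{C}$, and let $\eta_x:x\to Ex$ be a completion of $x$ in $\mathcal{C}$ relative to $\mathcal{H}$. Then $\eta_x$ is an isomorphism, and $x$ is complete relative to $\mathcal{H}$.
   Context: A refinement of a category $\mathcal{C}$ is a subcategory containing all objects and all isomorphisms of $\mathcal{C}$. A polarity is a category $\mathcal{C}$ with two refinements $\mathcal{C}_+$ (positive arrows) and $\mathcal{C}_-$ (negative arrows). An object $x$ of a polarity is injective if for every positive arrow $g:a\to b$ and every negative arrow $f:a\to x$ there is an arrow $h:b\to x$ with $hg=f$. An object $z$ of a category is amphi-terminal if every object has at least one arrow to $z$ and $z$ has at most one arrow to any object. For an object $x$, let $x\downarrow_{\mathcal{H}}\mathcal{C}$ be the category whose objects are arrows $f:x\to a$ in $\mathcal{H}$, with morphisms from $f:x\to a$ to $g:x\to b$ the arrows $\xi:a\to b$ of $\mathcal{C}$ with $\xi f=g$. A completion of $x$ relative to $\mathcal{H}$ is an amphi-terminal object of $x\downarrow_{\mathcal{H}}\mathcal{C}$, and $x$ is complete relative to $\mathcal{H}$ if $1_x$ is such a completion. *)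

theory Defs
  imports Main
begin

text \<open>Categories given explicitly by objects, arrows, domain, codomain,
identities and composition (Comp g f is "g after f").\<close>

record ('o, 'a) cat =
  Obj  :: "'o set"
  Arr  :: "'a set"
  Dom  :: "'a \<Rightarrow> 'o"
  Cod  :: "'a \<Rightarrow> 'o"
  Id   :: "'o \<Rightarrow> 'a"
  Comp :: "'a \<Rightarrow> 'a \<Rightarrow> 'a"

definition category :: "('o, 'a) cat \<Rightarrow> bool" where
  "category C \<longleftrightarrow>
     (\<forall>f\<in>Arr C. Dom C f \<in> Obj C \<and> Cod C f \<in> Obj C) \<and>
     (\<forall>a\<in>Obj C. Id C a \<in> Arr C \<and> Dom C (Id C a) = a \<and> Cod C (Id C a) = a) \<and>
     (\<forall>f\<in>Arr C. \<forall>g\<in>Arr C. Cod C f = Dom C g \<longrightarrow>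
        Comp C g f \<in> Arr C \<and> Dom C (Comp C g f) = Dom C f \<and> Cod C (Comp C g f) = Cod C g) \<and>
     (\<forall>f\<in>Arr C. Comp C f (Id C (Dom C f)) = f \<and> Comp C (Id C (Cod C f)) f = f) \<and>
     (\<forall>f\<in>Arr C. \<forall>g\<in>Arr C. \<forall>h\<in>Arr C. Cod C f = Dom C g \<longrightarrow> Cod C g = Dom C h \<longrightarrow>
        Comp C h (Comp C g f) = Comp C (Comp C h g) f)"

definition iso :: "('o, 'a) cat \<Rightarrow> 'a \<Rightarrow> bool" where
  "iso C f \<longleftrightarrow> f \<in> Arr C \<and>
     (\<exists>g\<in>Arr C. Dom C g = Cod C f \<and> Cod C g = Dom C f \<and>
        Comp C g f = Id C (Dom C f) \<and> Comp C f g = Id C (Cod C f))"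

definition subcategory :: "('o, 'a) cat \<Rightarrow> 'a set \<Rightarrow> bool" where
  "subcategory C S \<longleftrightarrow> S \<subseteq> Arr C \<and>
     (\<forall>f\<in>S. Id C (Dom C f) \<in> S \<and> Id C (Cod C f) \<in> S) \<and>
     (\<forall>f\<in>S. \<forall>g\<in>S. Cod C f = Dom C g \<longrightarrow> Comp C g f \<in> S)"

definition refinement :: "('o, 'a) cat \<Rightarrow> 'a set \<Rightarrow> bool" where
  "refinement C S \<longleftrightarrow> subcategory C S \<and>
     (\<forall>a\<in>Obj C. Id C a \<in> S) \<and> (\<forall>f. iso C f \<longrightarrow> f \<in> S)"

definition polarity :: "('o, 'a) cat \<Rightarrow> 'a set \<Rightarrow> 'a set \<Rightarrow> bool" where
  "polarity C Pos Neg \<longleftrightarrow> category C \<and> refinement C Pos \<and> refinement C Neg"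

definition injective :: "('o, 'a) cat \<Rightarrow> 'a set \<Rightarrow> 'a set \<Rightarrow> 'o \<Rightarrow> bool" where
  "injective C Pos Neg x \<longleftrightarrow> x \<in> Obj C \<and>
     (\<forall>g\<in>Pos. \<forall>f\<in>Neg. Dom C g = Dom C f \<and> Cod C f = x \<longrightarrow>
        (\<exists>h\<in>Arr C. Dom C h = Cod C g \<and> Cod C h = x \<and> Comp C h g = f))"

text \<open>Objects of x \<down>_H C: arrows of H with domain x.
Morphisms from f to g: arrows xi of C from Cod f to Cod g with xi f = g.\<close>
definition slice_obj :: "('o, 'a) cat \<Rightarrow> 'a set \<Rightarrow> 'o \<Rightarrow> 'a \<Rightarrow> bool" where
  "slice_obj C H x f \<longleftrightarrow> f \<in> H \<and> Dom C f = x"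

definition slice_hom :: "('o, 'a) cat \<Rightarrow> 'a \<Rightarrow> 'a \<Rightarrow> 'a set" where
  "slice_hom C f g = {\<xi> \<in> Arr C. Dom C \<xi> = Cod C f \<and> Cod C \<xi> = Cod C g \<and> Comp C \<xi> f = g}"

text \<open>Amphi-terminal object z of x \<down>_H C: every object has at least one arrow
to z, and z has at most one arrow to any object.\<close>
definition completion :: "('o, 'a) cat \<Rightarrow> 'a set \<Rightarrow> 'o \<Rightarrow> 'a \<Rightarrow> bool" where
  "completion C H x z \<longleftrightarrow> slice_obj C H x z \<and>
     (\<forall>f. slice_obj C H x f \<longrightarrow> slice_hom C f z \<noteq> {}) \<and>
     (\<forall>f. slice_obj C H x f \<longrightarrow> (\<forall>\<xi>\<in>slice_hom C z f. \<forall>\<zeta>\<in>slice_hom C z f. \<xi> = \<zeta>))"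

definition complete :: "('o, 'a) cat \<Rightarrow> 'a set \<Rightarrow> 'o \<Rightarrow> bool" where
  "complete C H x \<longleftrightarrow> completion C H x (Id C x)"

end

theory Submission
  imports Defs
begin

lemma cat_comp: "category C \<Longrightarrow> f \<in> Arr C \<Longrightarrow> g \<in> Arr C \<Longrightarrow> Cod C f = Dom C g \<Longrightarrow>
  Comp C g f \<in> Arr C \<and> Dom C (Comp C g f) = Dom C f \<and> Cod C (Comp C g f) = Cod C g"
  unfolding category_def by blast
lemma cat_assoc: "category C \<Longrightarrow> f \<in> Arr C \<Longrightarrow> g \<in> Arr C \<Longrightarrow> h \<in> Arr C \<Longrightarrow> Cod C f = Dom C g \<Longrightarrow> Cod C g = Dom C h \<Longrightarrow>
  Comp C h (Comp C g f) = Comp C (Comp C h g) f"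
  unfolding category_def by blast
lemma cat_idl: "category C \<Longrightarrow> f \<in> Arr C \<Longrightarrow> Comp C (Id C (Cod C f)) f = f"
  unfolding category_def by blast
lemma cat_idr: "category C \<Longrightarrow> f \<in> Arr C \<Longrightarrow> Comp C f (Id C (Dom C f)) = f"
  unfolding category_def by blast
lemma cat_cod: "category C \<Longrightarrow> f \<in> Arr C \<Longrightarrow> Cod C f \<in> Obj C"
  unfolding category_def by blast
lemma cat_id: "category C \<Longrightarrow> a \<in> Obj C \<Longrightarrow> Id C a \<in> Arr C \<and> Dom C (Id C a) = a \<and> Cod C (Id C a) = a"
  unfolding category_def by blast

theorem mainTheorem5:
  fixes C :: "('o, 'a) cat" and Pos Neg H :: "'a set" and x :: 'o and \<eta> :: 'a
  assumes "polarity C Pos Neg"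
    and "refinement C H" and "H \<subseteq> Pos"
    and "injective C Pos Neg x"
    and "completion C H x \<eta>"
  shows "iso C \<eta> \<and> complete C H x"
proof -
  have cat: "category C" and rN: "refinement C Neg" using assms(1) unfolding polarity_def by auto
  have xo: "x \<in> Obj C" using assms(4) unfolding injective_def by auto
  have etaH: "\<eta> \<in> H" and deta: "Dom C \<eta> = x" using assms(5) unfolding completion_def slice_obj_def by auto
  have etaA: "\<eta> \<in> Arr C" using etaH assms(2) unfolding refinement_def subcategory_def by auto
  have etaP: "\<eta> \<in> Pos" using etaH assms(3) by auto
  have idN: "Id C x \<in> Neg" using rN xo unfolding refinement_def by auto
  have idx: "Id C x \<in> Arr C" "Dom C (Id C x) = x" "Cod C (Id C x) = x"
    using cat_id[OF cat xo] by auto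
  obtain h where h: "h \<in> Arr C" "Dom C h = Cod C \<eta>" "Cod C h = x" "Comp C h \<eta> = Id C x"
    using assms(4) etaP idN deta idx unfolding injective_def by metis
  let ?E = "Cod C \<eta>"
  have ce: "Cod C \<eta> \<in> Obj C" using cat_cod[OF cat etaA] by auto
  have idE: "Id C ?E \<in> Arr C" "Dom C (Id C ?E) = ?E" "Cod C (Id C ?E) = ?E"
    using cat_id[OF cat ce] by auto
  have eh: "Comp C \<eta> h \<in> Arr C" "Dom C (Comp C \<eta> h) = ?E" "Cod C (Comp C \<eta> h) = ?E"
    using cat_comp[OF cat h(1) etaA] h deta by auto
  have "Comp C (Comp C \<eta> h) \<eta> = Comp C \<eta> (Comp C h \<eta>)"
    using cat_assoc[OF cat etaA h(1) etaA] h deta by auto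
  also have "\<dots> = \<eta>" using h cat_idr[OF cat etaA] deta by auto
  finally have e1: "Comp C (Comp C \<eta> h) \<eta> = \<eta>" .
  have e2: "Comp C (Id C ?E) \<eta> = \<eta>" using cat_idl[OF cat etaA] by auto
  have so: "slice_obj C H x \<eta>" using etaH deta unfolding slice_obj_def by auto
  have "Comp C \<eta> h \<in> slice_hom C \<eta> \<eta>" "Id C ?E \<in> slice_hom C \<eta> \<eta>"
    using eh e1 idE e2 unfolding slice_hom_def by auto
  hence eq: "Comp C \<eta> h = Id C ?E" using assms(5) so unfolding completion_def by blast
  have iso: "iso C \<eta>" unfolding iso_def using etaA h deta eq by auto
  have idH: "Id C x \<in> H" using assms(2) xo unfolding refinement_def by auto
  have c2: "slice_hom C f (Id C x) \<noteq> {}" if f: "slice_obj C H x f" for f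
  proof -
    obtain \<xi> where xi: "\<xi> \<in> slice_hom C f \<eta>" using assms(5) f unfolding completion_def by blast
    have fA: "f \<in> Arr C" "Dom C f = x" using f assms(2) unfolding slice_obj_def refinement_def subcategory_def by auto
    have xi': "\<xi> \<in> Arr C" "Dom C \<xi> = Cod C f" "Cod C \<xi> = ?E" "Comp C \<xi> f = \<eta>"
      using xi unfolding slice_hom_def by auto
    have "Comp C (Comp C h \<xi>) f = Comp C h (Comp C \<xi> f)"
      using cat_assoc[OF cat fA(1) xi'(1) h(1)] xi' h by auto
    also have "\<dots> = Id C x" using xi' h by simp
    finally have "Comp C (Comp C h \<xi>) f = Id C x" .
    moreover have "Comp C h \<xi> \<in> Arr C" "Dom C (Comp C h \<xi>) = Cod C f" "Cod C (Comp C h \<xi>) = x"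
      using cat_comp[OF cat xi'(1) h(1)] xi' h by auto
    ultimately have "Comp C h \<xi> \<in> slice_hom C f (Id C x)" using idx unfolding slice_hom_def by auto
    thus ?thesis by auto
  qed
  have c3: "\<forall>\<xi>\<in>slice_hom C (Id C x) f. \<forall>\<zeta>\<in>slice_hom C (Id C x) f. \<xi> = \<zeta>" for f
  proof (intro ballI)
    fix \<xi> \<zeta> assume a: "\<xi> \<in> slice_hom C (Id C x) f" "\<zeta> \<in> slice_hom C (Id C x) f"
    have "\<xi> = f" using a(1) cat_idr[OF cat, of \<xi>] idx unfolding slice_hom_def by auto
    moreover have "\<zeta> = f" using a(2) cat_idr[OF cat, of \<zeta>] idx unfolding slice_hom_def by auto
    ultimately show "\<xi> = \<zeta>" by simp
  qed
  have "complete C H x" unfolding complete_def completion_def slice_obj_def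
    using idH idx c2 c3 unfolding slice_obj_def by auto
  with iso show ?thesis by simp
qed

end
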